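(* Let $P$ be a 6-stack and let $Q$ be a retract of $P$ that is a 4-tower. Then $P(0)\cap Q(0)\neq\emptyset$, where $Q(0)$ is the set of minimal elements of $Q$.
   Context: All posets are finite. For a poset $P$ and $p\in P$, the rank $r(p)$ of $p$ is the largest $m$ such that there is a chain $p_0<\dots<p_m=p$ in $P$. $P$ is ranked of rank $r(P)$ if every maximal chain has exactly $r(P)+1$ elements. For $0\le i\le j$, $P(i,j)=\{p\in P:i\le r(p)\le j\}$, $P(i)=P(i,i)$ (induced order). A subset $Q\subseteq P$ (induced order) is a retract of $P$ if there is an order-preserving $f:P\to Q$ with $f(q)=q$ for all $q\in Q$. The 6-crown $C_6$ is the poset on $\{x_0,x_1,x_2,y_0,y_1,y_2\}$ whose only strict comparabilities are $x_0<y_0>x_1<y_1>x_2<y_2>x_0$. A 6-stack is a ranked poset $P$ of rank $n\ge1$ such that $P(i,i+1)\cong C_6$ for each $0\le i<n$. The ordinal sum of posets $P_1,\dots,P_k$ ($k\ge1$) is their disjoint union ordered by the orders of the $P_i$ together with $p<q$ whenever $p\in P_i,q\in P_j,i<j$. A 4-tower is an ordinal sum of one or more two-element antichains. *)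

theory Defs
  imports Main
begin

text \<open>A finite poset is given by a carrier set P and a relation le, which is a
partial order on P. Subsets carry the induced order (same relation le).\<close>

definition poset_on :: "'a set \<Rightarrow> ('a \<Rightarrow> 'a \<Rightarrow> bool) \<Rightarrow> bool" where
  "poset_on P le \<longleftrightarrow> finite P \<and>
     (\<forall>x\<in>P. le x x) \<and>
     (\<forall>x\<in>P. \<forall>y\<in>P. le x y \<and> le y x \<longrightarrow> x = y) \<and>
     (\<forall>x\<in>P. \<forall>y\<in>P. \<forall>z\<in>P. le x y \<and> le y z \<longrightarrow> le x z)"

definition chain_to :: "'a set \<Rightarrow> ('a \<Rightarrow> 'a \<Rightarrow> bool) \<Rightarrow> 'a \<Rightarrow> nat \<Rightarrow> bool" where
  "chain_to P le p m \<longleftrightarrow> (\<exists>c :: nat \<Rightarrow> 'a.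
     (\<forall>i\<le>m. c i \<in> P) \<and> (\<forall>i<m. le (c i) (c (Suc i)) \<and> c i \<noteq> c (Suc i)) \<and> c m = p)"

definition rank :: "'a set \<Rightarrow> ('a \<Rightarrow> 'a \<Rightarrow> bool) \<Rightarrow> 'a \<Rightarrow> nat" where
  "rank P le p = (GREATEST m. chain_to P le p m)"

definition levels :: "'a set \<Rightarrow> ('a \<Rightarrow> 'a \<Rightarrow> bool) \<Rightarrow> nat \<Rightarrow> nat \<Rightarrow> 'a set" where
  "levels P le i j = {p \<in> P. i \<le> rank P le p \<and> rank P le p \<le> j}"

abbreviation level :: "'a set \<Rightarrow> ('a \<Rightarrow> 'a \<Rightarrow> bool) \<Rightarrow> nat \<Rightarrow> 'a set" where
  "level P le i \<equiv> levels P le i i"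

definition is_chain :: "'a set \<Rightarrow> ('a \<Rightarrow> 'a \<Rightarrow> bool) \<Rightarrow> 'a set \<Rightarrow> bool" where
  "is_chain P le C \<longleftrightarrow> C \<subseteq> P \<and> (\<forall>x\<in>C. \<forall>y\<in>C. le x y \<or> le y x)"

definition maximal_chain :: "'a set \<Rightarrow> ('a \<Rightarrow> 'a \<Rightarrow> bool) \<Rightarrow> 'a set \<Rightarrow> bool" where
  "maximal_chain P le C \<longleftrightarrow> is_chain P le C \<and> (\<forall>D. is_chain P le D \<and> C \<subseteq> D \<longrightarrow> D = C)"

definition ranked :: "'a set \<Rightarrow> ('a \<Rightarrow> 'a \<Rightarrow> bool) \<Rightarrow> nat \<Rightarrow> bool" where
  "ranked P le n \<longleftrightarrow> (\<forall>C. maximal_chain P le C \<longrightarrow> card C = Suc n)"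

text \<open>The 6-crown on {0..5}: x_i = i, y_i = 3+i (i = 0,1,2), with
  x0 < y0 > x1 < y1 > x2 < y2 > x0.\<close>
definition crown6_le :: "nat \<Rightarrow> nat \<Rightarrow> bool" where
  "crown6_le a b \<longleftrightarrow> a = b \<or>
     (a, b) \<in> {(0,3), (1,3), (1,4), (2,4), (2,5), (0,5)}"

definition crown6 :: "nat set" where
  "crown6 = {0..5}"

definition order_iso :: "'a set \<Rightarrow> ('a \<Rightarrow> 'a \<Rightarrow> bool) \<Rightarrow> 'b set \<Rightarrow> ('b \<Rightarrow> 'b \<Rightarrow> bool) \<Rightarrow> bool" where
  "order_iso A leA B leB \<longleftrightarrow> (\<exists>f. bij_betw f A B \<and>
     (\<forall>x\<in>A. \<forall>y\<in>A. leA x y \<longleftrightarrow> leB (f x) (f y)))"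

definition six_stack :: "'a set \<Rightarrow> ('a \<Rightarrow> 'a \<Rightarrow> bool) \<Rightarrow> bool" where
  "six_stack P le \<longleftrightarrow> poset_on P le \<and> (\<exists>n\<ge>1. ranked P le n \<and>
     (\<forall>i<n. order_iso (levels P le i (Suc i)) le crown6 crown6_le))"

definition retract :: "'a set \<Rightarrow> ('a \<Rightarrow> 'a \<Rightarrow> bool) \<Rightarrow> 'a set \<Rightarrow> bool" where
  "retract P le Q \<longleftrightarrow> Q \<subseteq> P \<and> (\<exists>f. (\<forall>p\<in>P. f p \<in> Q) \<and>
     (\<forall>p\<in>P. \<forall>p'\<in>P. le p p' \<longrightarrow> le (f p) (f p')) \<and> (\<forall>q\<in>Q. f q = q))"

text \<open>Q (induced order) is an ordinal sum A_0 \<oplus> ... \<oplus> A_(k-1) of k \<ge> 1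
  two-element antichains.\<close>
definition four_tower :: "'a set \<Rightarrow> ('a \<Rightarrow> 'a \<Rightarrow> bool) \<Rightarrow> bool" where
  "four_tower Q le \<longleftrightarrow> (\<exists>k\<ge>1. \<exists>A :: nat \<Rightarrow> 'a set.
     (\<forall>i<k. card (A i) = 2) \<and>
     (\<forall>i<k. \<forall>j<k. i \<noteq> j \<longrightarrow> A i \<inter> A j = {}) \<and>
     Q = (\<Union>i<k. A i) \<and>
     (\<forall>i<k. \<forall>j<k. \<forall>p\<in>A i. \<forall>q\<in>A j. le p q \<longleftrightarrow> (p = q \<or> i < j)))"

end

theory Submission
  imports Defs
begin

lemma po_refl: "poset_on P le \<Longrightarrow> x \<in> P \<Longrightarrow> le x x"
  unfolding poset_on_def by blast

lemma po_trans: "poset_on P le \<Longrightarrow> x \<in> P \<Longrightarrow> y \<in> P \<Longrightarrow> z \<in> P \<Longrightarrow> le x y \<Longrightarrow> le y z \<Longrightarrow> le x z"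
  unfolding poset_on_def by blast

lemma po_antisym: "poset_on P le \<Longrightarrow> x \<in> P \<Longrightarrow> y \<in> P \<Longrightarrow> le x y \<Longrightarrow> le y x \<Longrightarrow> x = y"
  unfolding poset_on_def by blast

lemma chain_mono:
  assumes po: "poset_on P le"
    and c: "\<forall>i\<le>m. c i \<in> P" "\<forall>i<m. le (c i) (c (Suc i)) \<and> c i \<noteq> c (Suc i)"
  shows "i \<le> j \<Longrightarrow> j \<le> m \<Longrightarrow> le (c i) (c j)"
proof (induction j)
  case 0 then show ?case using po c unfolding poset_on_def by auto
next
  case (Suc j)
  show ?case
  proof (cases "i = Suc j")
    case True then show ?thesis using po c Suc.prems unfolding poset_on_def by auto
  next
    case False
    then have "le (c i) (c j)" using Suc by auto
    moreover have "le (c j) (c (Suc j))" using c Suc.prems by auto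
    ultimately show ?thesis using po c Suc.prems unfolding poset_on_def
      by (metis Suc_leD order_trans le_refl)
  qed
qed

lemma chain_bound:
  assumes po: "poset_on P le" and ch: "chain_to P le p m"
  shows "m < card P"
proof -
  obtain c where c: "\<forall>i\<le>m. c i \<in> P" "\<forall>i<m. le (c i) (c (Suc i)) \<and> c i \<noteq> c (Suc i)" "c m = p"
    using ch unfolding chain_to_def by blast
  have inj: "inj_on c {0..m}"
  proof (rule inj_onI)
    fix i j assume i: "i \<in> {0..m}" and j: "j \<in> {0..m}" and eq: "c i = c j"
    show "i = j"
    proof (rule ccontr)
      assume "i \<noteq> j"
      then consider "i < j" | "j < i" by linarith
      then show False
      proof cases
        case 1
        have a: "le (c (Suc i)) (c j)" using chain_mono[OF po c(1) c(2), of "Suc i" j] 1 j by auto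
        have b: "le (c i) (c (Suc i))" "c i \<noteq> c (Suc i)" using c(2) 1 j by auto
        have "c i \<in> P" "c (Suc i) \<in> P" using c(1) 1 j by auto
        then show False using po a b eq unfolding poset_on_def by metis
      next
        case 2
        have a: "le (c (Suc j)) (c i)" using chain_mono[OF po c(1) c(2), of "Suc j" i] 2 i by auto
        have b: "le (c j) (c (Suc j))" "c j \<noteq> c (Suc j)" using c(2) 2 i by auto
        have "c j \<in> P" "c (Suc j) \<in> P" using c(1) 2 i by auto
        then show False using po a b eq unfolding poset_on_def by metis
      qed
    qed
  qed
  have "c ` {0..m} \<subseteq> P" using c(1) by auto
  moreover have "finite P" using po unfolding poset_on_def by auto
  ultimately have "card (c ` {0..m}) \<le> card P" by (simp add: card_mono)
  moreover have "card (c ` {0..m}) = Suc m" using inj by (simp add: card_image)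
  ultimately show ?thesis by simp
qed

lemma chain_zero: "p \<in> P \<Longrightarrow> chain_to P le p 0"
  unfolding chain_to_def by (rule exI[of _ "\<lambda>_. p"]) auto

lemma rank_chain:
  assumes po: "poset_on P le" and p: "p \<in> P"
  shows "chain_to P le p (rank P le p)"
  unfolding rank_def
  by (rule GreatestI_nat[of _ 0 "card P"]) (use chain_zero[OF p] chain_bound[OF po] in \<open>auto simp: less_imp_le\<close>)

lemma rank_ge:
  assumes po: "poset_on P le" and ch: "chain_to P le p m"
  shows "m \<le> rank P le p"
  unfolding rank_def
  by (rule Greatest_le_nat[of _ m "card P"]) (use ch chain_bound[OF po] in \<open>auto simp: less_imp_le\<close>)

lemma rank_less:
  assumes po: "poset_on P le" and p: "p \<in> P" and q: "q \<in> P" and lqp: "le q p" and ne: "q \<noteq> p"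
  shows "rank P le q < rank P le p"
proof -
  define r where "r = rank P le q"
  obtain c where c: "\<forall>i\<le>r. c i \<in> P" "\<forall>i<r. le (c i) (c (Suc i)) \<and> c i \<noteq> c (Suc i)" "c r = q"
    using rank_chain[OF po q] unfolding chain_to_def r_def by blast
  have "chain_to P le p (Suc r)"
    unfolding chain_to_def
    apply (rule exI[of _ "c(Suc r := p)"])
    using c p lqp ne by (auto simp: less_Suc_eq le_Suc_eq)
  then show ?thesis using rank_ge[OF po] r_def by fastforce
qed

lemma rank_step:
  assumes po: "poset_on P le" and p: "p \<in> P" and rk: "rank P le p = Suc k"
  shows "\<exists>q\<in>P. le q p \<and> q \<noteq> p \<and> rank P le q = k"
proof -
  obtain c where c: "\<forall>i\<le>Suc k. c i \<in> P" "\<forall>i<Suc k. le (c i) (c (Suc i)) \<and> c i \<noteq> c (Suc i)" "c (Suc k) = p"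
    using rank_chain[OF po p] rk unfolding chain_to_def by auto
  have q: "c k \<in> P" using c by auto
  have "chain_to P le (c k) k" unfolding chain_to_def
    apply (rule exI[of _ c]) using c by auto
  then have r1: "k \<le> rank P le (c k)" by (rule rank_ge[OF po])
  have l1: "le (c k) p" "c k \<noteq> p" using c by auto
  have "rank P le (c k) < rank P le p" by (rule rank_less[OF po p q l1])
  then have "rank P le (c k) = k" using r1 rk by simp
  then show ?thesis using q l1 by blast
qed

lemma rank_down:
  assumes po: "poset_on P le"
  shows "p \<in> P \<Longrightarrow> rank P le p = k + j \<Longrightarrow> \<exists>q\<in>P. le q p \<and> rank P le q = k"
proof (induction j arbitrary: p)
  case 0
  have "le p p" by (rule po_refl[OF po 0(1)])
  moreover have "rank P le p = k" using 0(2) by simp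
  ultimately show ?case using 0(1) by blast
next
  case (Suc j)
  have rs: "rank P le p = Suc (k + j)" using Suc.prems(2) by simp
  obtain q where q: "q \<in> P" "le q p" "rank P le q = k + j"
    using rank_step[OF po Suc.prems(1) rs] by blast
  obtain r where r: "r \<in> P" "le r q" "rank P le r = k" using Suc.IH[OF q(1) q(3)] by auto
  show ?case using po_trans[OF po r(1) q(1) Suc.prems(1) r(2) q(2)] r by blast
qed

theorem lemma5p6:
  fixes P Q :: "'a set" and le :: "'a \<Rightarrow> 'a \<Rightarrow> bool"
  assumes "six_stack P le"
    and "retract P le Q"
    and "four_tower Q le"
  shows "level P le 0 \<inter> level Q le 0 \<noteq> {}"
proof -
  have po: "poset_on P le" using assms(1) unfolding six_stack_def by auto
  obtain n :: nat where n0: "n \<ge> 1" "\<forall>i<n. order_iso (levels P le i (Suc i)) le crown6 crown6_le"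
    using assms(1) unfolding six_stack_def by blast
  have n: "order_iso (levels P le 0 1) le crown6 crown6_le" using n0 by auto
  define L where "L = levels P le 0 1"
  obtain g where g: "bij_betw g L crown6" "\<forall>x\<in>L. \<forall>y\<in>L. le x y \<longleftrightarrow> crown6_le (g x) (g y)"
    using n unfolding order_iso_def L_def by auto
  have LP: "L \<subseteq> P" unfolding L_def levels_def by auto
  have xs_ex: "\<exists>x\<in>L. g x = c" if "c < 3" for c
  proof -
    have "c \<in> crown6" using that unfolding crown6_def by auto
    then show ?thesis using g(1) unfolding bij_betw_def by force
  qed
  define xs where "xs c = (SOME x. x \<in> L \<and> g x = c)" for c
  have xs: "xs c \<in> L" "g (xs c) = c" if "c < 3" for c
    using someI_ex[OF xs_ex[OF that, unfolded Bex_def]] that unfolding xs_def by auto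
  have QP: "Q \<subseteq> P" using assms(2) unfolding retract_def by auto
  obtain f where f: "\<forall>p\<in>P. f p \<in> Q" "\<forall>p\<in>P. \<forall>p'\<in>P. le p p' \<longrightarrow> le (f p) (f p')"
      "\<forall>q\<in>Q. f q = q"
    using assms(2) unfolding retract_def by auto
  obtain k :: nat and A :: "nat \<Rightarrow> 'a set" where kA: "k \<ge> 1" "\<forall>i<k. card (A i) = 2" "Q = (\<Union>i<k. A i)"
    "\<forall>i<k. \<forall>j<k. \<forall>p\<in>A i. \<forall>q\<in>A j. le p q \<longleftrightarrow> (p = q \<or> i < j)"
    using assms(3) unfolding four_tower_def by blast
  obtain a b where ab: "A 0 = {a, b}" "a \<noteq> b"
  proof -
    have "card (A 0) = 2" using kA(1,2) by simp
    then show ?thesis using that unfolding card_2_iff by blast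
  qed
  have A0sub: "A 0 \<subseteq> Q" unfolding kA(3) using kA(1) by (intro UN_upper) simp
  have A0Q: "a \<in> Q" "b \<in> Q" using ab(1) A0sub by blast+
  have minA: "q = z" if z: "z \<in> A 0" and q: "q \<in> Q" and lq: "le q z" for z q
  proof -
    obtain j where j: "j < k" "q \<in> A j" using q kA(3) by auto
    show ?thesis using kA(4)[rule_format, OF j(1), of 0 q z] j z lq kA(1) by auto
  qed
  have rankQ: "rank Q le z = 0" if z: "z \<in> A 0" for z
  proof -
    have "m = 0" if ch: "chain_to Q le z m" for m
    proof (rule ccontr)
      assume "m \<noteq> 0"
      then obtain m' where m': "m = Suc m'" by (cases m) auto
      obtain c where c: "\<forall>i\<le>m. c i \<in> Q" "\<forall>i<m. le (c i) (c (Suc i)) \<and> c i \<noteq> c (Suc i)" "c m = z"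
        using ch unfolding chain_to_def by blast
      have "c m' \<in> Q" "le (c m') z" "c m' \<noteq> z" using c m' by auto
      then show False using minA[OF z] by auto
    qed
    moreover have "chain_to Q le z 0" using z A0sub by (intro chain_zero) blast
    ultimately show ?thesis unfolding rank_def by (metis (mono_tags) Greatest_equality le_refl)
  qed
  have key: "\<exists>c1 c2. c1 \<noteq> c2 \<and> c1 < 3 \<and> c2 < 3 \<and> f (xs c1) = z \<and> f (xs c2) = z"
    if z: "z \<in> A 0" and rz: "rank P le z \<ge> 1" for z
  proof -
    have zQ: "z \<in> Q" using z A0sub by blast
    have zP: "z \<in> P" using zQ QP by auto
    obtain y where y: "y \<in> P" "le y z" "rank P le y = 1"
      using rank_down[OF po zP, of 1 "rank P le z - 1"] rz by auto
    obtain q where q: "q \<in> P" "le q y" "q \<noteq> y" "rank P le q = 0"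
      using rank_step[OF po y(1) y(3)[unfolded One_nat_def]] by auto
    have yL: "y \<in> L" and qL: "q \<in> L" using y q unfolding L_def levels_def by auto
    have "crown6_le (g q) (g y)" using g(2) yL qL q by auto
    moreover have "g q \<noteq> g y" using g(1) yL qL q(3) unfolding bij_betw_def inj_on_def by auto
    ultimately have gy: "(g q, g y) \<in> {(0,3), (1,3), (1,4), (2,4), (2,5), (0,5)}"
      unfolding crown6_le_def by auto
    have fz: "f z = z" using f(3) zQ by auto
    have fy: "le (f y) z" using f(2) y zP fz by metis
    have toz: "f (xs c) = z" if c: "c < 3" and cy: "crown6_le c (g y)" for c
    proof -
      have "le (xs c) y" using g(2) xs[OF c] yL cy by auto
      then have "le (f (xs c)) (f y)" using f(2) xs[OF c] LP y by blast
      moreover have "f (xs c) \<in> P" "f y \<in> P" using f(1) xs[OF c] LP y QP by blast+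
      ultimately have "le (f (xs c)) z" using fy po_trans[OF po _ _ zP] by blast
      then show ?thesis using minA[OF z] f(1) xs[OF c] LP by blast
    qed
    from gy consider "g y = 3" | "g y = 4" | "g y = 5" by auto
    then show ?thesis
    proof cases
      case 1
      have "f (xs 0) = z" by (rule toz) (simp_all add: crown6_le_def 1)
      moreover have "f (xs 1) = z" by (rule toz) (simp_all add: crown6_le_def 1)
      ultimately show ?thesis by (intro exI[of _ "0::nat"] exI[of _ "1::nat"]) simp
    next
      case 2
      have "f (xs 1) = z" by (rule toz) (simp_all add: crown6_le_def 2)
      moreover have "f (xs 2) = z" by (rule toz) (simp_all add: crown6_le_def 2)
      ultimately show ?thesis by (intro exI[of _ "1::nat"] exI[of _ "2::nat"]) simp
    next
      case 3
      have "f (xs 0) = z" by (rule toz) (simp_all add: crown6_le_def 3)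
      moreover have "f (xs 2) = z" by (rule toz) (simp_all add: crown6_le_def 3)
      ultimately show ?thesis by (intro exI[of _ "0::nat"] exI[of _ "2::nat"]) simp
    qed
  qed
  have good: "level P le 0 \<inter> level Q le 0 \<noteq> {}" if z: "z \<in> A 0" and rz: "rank P le z = 0" for z
  proof -
    have "z \<in> Q" using z A0sub by blast
    then have "z \<in> level P le 0 \<inter> level Q le 0"
      using QP rz rankQ[OF z] unfolding levels_def by auto
    then show ?thesis by auto
  qed
  show ?thesis
  proof (cases "rank P le a = 0 \<or> rank P le b = 0")
    case True then show ?thesis using good ab by auto
  next
    case False
    obtain c1 c2 where c: "c1 \<noteq> c2" "c1 < 3" "c2 < 3" "f (xs c1) = a" "f (xs c2) = a"
      using key[of a] False ab by auto
    obtain d1 d2 where d: "d1 \<noteq> d2" "d1 < 3" "d2 < 3" "f (xs d1) = b" "f (xs d2) = b"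
      using key[of b] False ab by auto
    have "c1 = d1 \<or> c1 = d2 \<or> c2 = d1 \<or> c2 = d2" using c d by linarith
    then show ?thesis using c d ab(2) by auto
  qed
qed

end
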